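(* Let $r\ge 2$ and let $S$ be a general position set of the glued binary tree $GT(r)$. If $|S\cap V_r^{(1)}|\ge 2$, then to each vertex $v\in S\cap V_r^{(1)}$ one can assign a pair of quasi-leaves belonging to $T_v$ and not belonging to $S$, in such a way that the pairs assigned to distinct vertices of $S\cap V_r^{(1)}$ are pairwise disjoint.
   Context: A perfect binary tree of depth $r\ge1$ is a rooted tree in which every non-leaf vertex has exactly $2$ children and all leaves have depth $r$. The glued binary tree $GT(r)$ is obtained from two copies $T_r^{(1)}$ and $T_r^{(2)}$ of the perfect binary tree of depth $r$ by pairwise identifying their leaves (via a fixed isomorphism of the copies). The identified vertices are the quasi-leaves; $L(GT(r))=V(T_r^{(1)})\cap V(T_r^{(2)})$, and $V_r^{(i)}=V(T_r^{(i)})\setminus L(GT(r))$ for $i\in\{1,2\}$. For $u\in V_r^{(1)}$, $T_u$ denotes the subtree of $T_r^{(1)}$ rooted at $u$ consisting of $u$ and all its descendants (its leaves being the quasi-leaves below $u$). For $S\subseteq V(G)$, two vertices $u,v$ are $S$-positionable if every shortest $u,v$-path $P$ satisfies $V(P)\cap S\subseteq\{u,v\}$; $S$ is a general position set if every two vertices of $S$ are $S$-positionable. *)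

theory Defs
  imports Main "HOL-Library.Sublist"
begin

definition walk :: "('a \<Rightarrow> 'a \<Rightarrow> bool) \<Rightarrow> 'a list \<Rightarrow> bool" where
  "walk adj p \<longleftrightarrow> p \<noteq> [] \<and> (\<forall>i. Suc i < length p \<longrightarrow> adj (p ! i) (p ! Suc i))"

text \<open>A shortest u,v-path: a walk from u to v of minimum number of vertices
  (a minimum-length walk is automatically a path).\<close>
definition shortest_path :: "('a \<Rightarrow> 'a \<Rightarrow> bool) \<Rightarrow> 'a \<Rightarrow> 'a \<Rightarrow> 'a list \<Rightarrow> bool" where
  "shortest_path adj u v p \<longleftrightarrow> walk adj p \<and> hd p = u \<and> last p = v \<and>
     (\<forall>q. walk adj q \<and> hd q = u \<and> last q = v \<longrightarrow> length p \<le> length q)"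

definition positionable :: "('a \<Rightarrow> 'a \<Rightarrow> bool) \<Rightarrow> 'a set \<Rightarrow> 'a \<Rightarrow> 'a \<Rightarrow> bool" where
  "positionable adj S u v \<longleftrightarrow> (\<forall>p. shortest_path adj u v p \<longrightarrow> set p \<inter> S \<subseteq> {u, v})"

definition general_position :: "'a set \<Rightarrow> ('a \<Rightarrow> 'a \<Rightarrow> bool) \<Rightarrow> 'a set \<Rightarrow> bool" where
  "general_position V adj S \<longleftrightarrow> S \<subseteq> V \<and> (\<forall>u\<in>S. \<forall>v\<in>S. positionable adj S u v)"

text \<open>Vertices of the perfect binary tree of depth r are binary words of length \<le> r
  (the root is the empty word, the children of w are w@[False], w@[True]).
  T1 w / T2 w are the non-leaf vertices of the two copies (length w < r);
  QL w are the quasi-leaves (length w = r), identified via the identity labelling.\<close>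
datatype gvert = T1 "bool list" | T2 "bool list" | QL "bool list"

definition emb1 :: "nat \<Rightarrow> bool list \<Rightarrow> gvert" where
  "emb1 r w = (if length w = r then QL w else T1 w)"

definition emb2 :: "nat \<Rightarrow> bool list \<Rightarrow> gvert" where
  "emb2 r w = (if length w = r then QL w else T2 w)"

definition GT_verts :: "nat \<Rightarrow> gvert set" where
  "GT_verts r = {T1 w | w. length w < r} \<union> {T2 w | w. length w < r} \<union> {QL w | w. length w = r}"

definition GT_adj :: "nat \<Rightarrow> gvert \<Rightarrow> gvert \<Rightarrow> bool" where
  "GT_adj r x y \<longleftrightarrow> (\<exists>w b. length w < r \<and>
      ({x, y} = {emb1 r w, emb1 r (w @ [b])} \<or> {x, y} = {emb2 r w, emb2 r (w @ [b])}))"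

definition quasi_leaves :: "nat \<Rightarrow> gvert set" where
  "quasi_leaves r = {QL w | w. length w = r}"

definition V1 :: "nat \<Rightarrow> gvert set" where
  "V1 r = {T1 w | w. length w < r}"

definition V2 :: "nat \<Rightarrow> gvert set" where
  "V2 r = {T2 w | w. length w < r}"

fun subtree_leaves :: "nat \<Rightarrow> gvert \<Rightarrow> gvert set" where
  "subtree_leaves r (T1 w) = {QL x | x. length x = r \<and> prefix w x}"
| "subtree_leaves r _ = {}"

end

theory Submission imports Defs "HOL-Library.Sublist" begin

abbreviation lcp where "lcp \<equiv> longest_common_prefix"

fun proj :: "gvert \<Rightarrow> bool list" where
  "proj (T1 w) = w" | "proj (T2 w) = w" | "proj (QL w) = w"

lemma proj_emb1[simp]: "proj (emb1 r w) = w" by (simp add: emb1_def)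
lemma proj_emb2[simp]: "proj (emb2 r w) = w" by (simp add: emb2_def)

lemma emb1_inj: "emb1 r x = emb1 r y \<Longrightarrow> x = y"
  by (metis proj_emb1)

lemma adj_proj: "GT_adj r x y \<Longrightarrow> (\<exists>b. proj y = proj x @ [b]) \<or> (\<exists>b. proj x = proj y @ [b])"
  unfolding GT_adj_def by (auto simp: doubleton_eq_iff)

lemma prefix_take_eq: "prefix w x \<Longrightarrow> take (length w) x = w"
  by (metis append_eq_conv_conj prefixE)

definition td :: "bool list \<Rightarrow> bool list \<Rightarrow> nat" where
  "td z y = length z + length y - 2 * length (lcp z y)"

lemma lcp_len: "length (lcp z y) \<le> length z" "length (lcp z y) \<le> length y"
  by (auto intro: prefix_length_le longest_common_prefix_prefix1 longest_common_prefix_prefix2)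

lemma lcp_snoc: "length (lcp z y) \<le> length (lcp z (y @ [b])) \<and> length (lcp z (y @ [b])) \<le> length (lcp z y) + 1"
proof -
  have "prefix (lcp z y) (y @ [b])"
    by (metis longest_common_prefix_prefix2 prefix_snoc)
  then have 1: "prefix (lcp z y) (lcp z (y @ [b]))"
    by (simp add: longest_common_prefix_max_prefix longest_common_prefix_prefix1)
  have "prefix (lcp z (y @ [b])) (y @ [b])" by (rule longest_common_prefix_prefix2)
  then have "lcp z (y @ [b]) = y @ [b] \<or> prefix (lcp z (y @ [b])) y" by simp
  moreover have "prefix (lcp z (y @ [b])) y \<Longrightarrow> prefix (lcp z (y @ [b])) (lcp z y)"
    by (rule longest_common_prefix_max_prefix[OF longest_common_prefix_prefix1])
  ultimately have 2: "lcp z (y @ [b]) = y @ [b] \<or> prefix (lcp z (y @ [b])) (lcp z y)" by blast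
  have 3: "lcp z y = y" if h: "lcp z (y @ [b]) = y @ [b]"
  proof -
    have "prefix (y @ [b]) z" using longest_common_prefix_prefix1[of z "y @ [b]"] h by simp
    then have "prefix y z" by (metis prefix_order.dual_order.trans prefix_snoc prefix_order.refl)
    then have "prefix y (lcp z y)" by (rule longest_common_prefix_max_prefix) simp
    then show ?thesis using longest_common_prefix_prefix2[of z y] by (rule prefix_order.antisym[rotated])
  qed
  note 2 3
  moreover have "length (lcp z y) \<le> length (lcp z (y @ [b]))" using prefix_length_le[OF 1] .
  ultimately show ?thesis using prefix_length_le[of "lcp z (y @ [b])" "lcp z y"] by force
qed

lemma td_step: "td z y \<le> td z (y @ [b]) + 1 \<and> td z (y @ [b]) \<le> td z y + 1"
  using lcp_snoc[of z y b] lcp_len[of z y] lcp_len[of z "y@[b]"] unfolding td_def by auto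

lemma td_adj: "GT_adj r x y \<Longrightarrow> td z (proj x) \<le> td z (proj y) + 1"
  using adj_proj[of r x y] td_step by (metis)

lemma walk_Cons: "walk adj (x # y # p) \<longleftrightarrow> adj x y \<and> walk adj (y # p)"
  unfolding walk_def
  apply safe
    apply force
   apply (metis Suc_less_eq length_Cons nth_Cons_Suc)
  by (metis Suc_less_eq length_Cons less_Suc_eq_0_disj nth_Cons_0 nth_Cons_Suc)

lemma walk_lower: "walk (GT_adj r) q \<Longrightarrow> td z (proj (hd q)) \<le> td z (proj (last q)) + length q - 1"
proof (induction q)
  case Nil then show ?case by (simp add: walk_def)
next
  case (Cons x q)
  show ?case
  proof (cases q)
    case Nil then show ?thesis by simp
  next
    case (Cons y q')
    with Cons.prems have "GT_adj r x y" "walk (GT_adj r) q" by (auto simp: walk_Cons)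
    with Cons.IH have "td z (proj y) \<le> td z (proj (last q)) + length q - 1" using \<open>q = y # q'\<close> by simp
    moreover have "td z (proj x) \<le> td z (proj y) + 1" using td_adj \<open>GT_adj r x y\<close> by blast
    ultimately show ?thesis using \<open>q = y # q'\<close> by simp
  qed
qed

lemma td_self: "td z z = 0"
  unfolding td_def
  by (metis diff_self_eq_0 longest_common_prefix_max_prefix longest_common_prefix_prefix1 mult_2 prefix_order.antisym prefix_order.order_refl)

lemma walk_len: "walk (GT_adj r) q \<Longrightarrow> td (proj (last q)) (proj (hd q)) + 1 \<le> length q"
  using walk_lower[of r q "proj (last q)"] td_self by (cases q) (auto simp: walk_def)

lemma adj_take: "Suc j \<le> length w \<Longrightarrow> length w \<le> r \<Longrightarrow>
   GT_adj r (emb1 r (take j w)) (emb1 r (take (Suc j) w)) \<and> GT_adj r (emb1 r (take (Suc j) w)) (emb1 r (take j w))"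
  unfolding GT_adj_def
  apply (rule conjI)
   apply (rule exI[of _ "take j w"], rule exI[of _ "w ! j"])
   apply (simp add: take_Suc_conv_app_nth)
  apply (rule exI[of _ "take j w"], rule exI[of _ "w ! j"])
  by (auto simp add: take_Suc_conv_app_nth)

lemma geo:
  assumes gp: "general_position (GT_verts r) (GT_adj r) S"
    and Sa: "emb1 r a \<in> S" and Sc: "emb1 r c \<in> S" and Sb: "emb1 r b \<in> S"
    and la: "length a \<le> r" and lc: "length c \<le> r"
    and bc: "prefix b c" and lb: "prefix (lcp c a) b" and ba: "b \<noteq> a" and bnc: "b \<noteq> c"
  shows False
proof -
  define l where "l = length (lcp c a)"
  have pa: "prefix (lcp c a) a" and pc: "prefix (lcp c a) c"
    by (rule longest_common_prefix_prefix2, rule longest_common_prefix_prefix1)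
  have tla: "take l a = lcp c a" and tlc: "take l c = lcp c a"
    using pa pc prefix_take_eq l_def by auto
  have la': "l \<le> length a" and lc': "l \<le> length c" using lcp_len l_def by auto
  have lbl: "l \<le> length b" using prefix_length_le[OF lb] l_def by simp
  have lbc: "length b \<le> length c" using prefix_length_le[OF bc] .
  define n where "n = (length a - l) + (length c - l) + 1"
  define F where "F i = emb1 r (if i \<le> length a - l then take (length a - i) a else take (i - (length a - l) + l) c)" for i
  define p where "p = map F [0..<n]"
  have Fc: "F i = emb1 r (take (i - (length a - l) + l) c)" if "i \<ge> length a - l" for i
    using that tla tlc la' unfolding F_def by (cases "i = length a - l") auto
  have walk: "walk (GT_adj r) p"
    unfolding walk_def
  proof safe
    show "p = [] \<Longrightarrow> False" by (simp add: p_def n_def)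
  next
    fix i assume "Suc i < length p"
    then have i: "Suc i < n" by (simp add: p_def)
    have "GT_adj r (F i) (F (Suc i))"
    proof (cases "Suc i \<le> length a - l")
      case True
      then have "F i = emb1 r (take (Suc (length a - Suc i)) a)" "F (Suc i) = emb1 r (take (length a - Suc i) a)"
        unfolding F_def using True by (auto simp: Suc_diff_Suc)
      then show ?thesis using adj_take[of "length a - Suc i" a r] la True by simp
    next
      case False
      have e: "Suc i - (length a - l) + l = Suc (i - (length a - l) + l)" using False by arith
      have "F i = emb1 r (take (i - (length a - l) + l) c)" using Fc[of i] False by simp
      moreover have "F (Suc i) = emb1 r (take (Suc (i - (length a - l) + l)) c)"
        using Fc[of "Suc i"] False e by simp
      ultimately have "F i = emb1 r (take (i - (length a - l) + l) c) \<and> F (Suc i) = emb1 r (take (Suc (i - (length a - l) + l)) c)" by simp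
      moreover have "Suc (i - (length a - l) + l) \<le> length c" using i False n_def lc' by linarith
      ultimately show ?thesis using adj_take[of "i - (length a - l) + l" c r] lc by simp
    qed
    then show "GT_adj r (p ! i) (p ! Suc i)" using i by (simp add: p_def)
  qed
  have hd: "hd p = emb1 r a"
  proof -
    have "[0..<n] = 0 # [Suc 0..<n]" by (rule upt_conv_Cons) (simp add: n_def)
    then have "hd p = F 0" by (simp add: p_def)
    then show ?thesis by (simp add: F_def)
  qed
  have last: "last p = emb1 r c"
  proof -
    have "last p = F (n - 1)" by (simp add: p_def n_def last_map)
    also have "\<dots> = emb1 r c" using Fc[of "n - 1"] n_def lc' by simp
    finally show ?thesis .
  qed
  have sp: "shortest_path (GT_adj r) (emb1 r a) (emb1 r c) p"
    unfolding shortest_path_def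
  proof (intro conjI allI impI walk hd last)
    fix q assume q: "walk (GT_adj r) q \<and> hd q = emb1 r a \<and> last q = emb1 r c"
    then have "td c a + 1 \<le> length q" using walk_len[of r q] by simp
    then show "length p \<le> length q" unfolding td_def p_def n_def l_def using la' lc' l_def by simp
  qed
  have "emb1 r b \<in> set p"
  proof -
    define i where "i = (length a - l) + (length b - l)"
    have "i < n" using i_def n_def lbc by simp
    moreover have "F i = emb1 r b" using Fc[of i] i_def lbl prefix_take_eq[OF bc] by simp
    ultimately have "p ! i = emb1 r b" "i < length p" by (simp_all add: p_def)
    then show ?thesis by (metis nth_mem)
  qed
  moreover have "positionable (GT_adj r) S (emb1 r a) (emb1 r c)"
    using gp Sa Sc unfolding general_position_def by blast
  then have "set p \<inter> S \<subseteq> {emb1 r a, emb1 r c}" using sp unfolding positionable_def by simp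
  ultimately have "emb1 r b \<in> {emb1 r a, emb1 r c}" using Sb by (meson IntI subsetD)
  then show False using emb1_inj[of r b a] emb1_inj[of r b c] ba bnc by auto
qed



lemma emb1_T1: "length w < r \<Longrightarrow> emb1 r w = T1 w" by (simp add: emb1_def)
lemma emb1_QL: "length w = r \<Longrightarrow> emb1 r w = QL w" by (simp add: emb1_def)

lemma child_exists:
  assumes gp: "general_position (GT_verts r) (GT_adj r) S"
    and W: "T1 w \<in> S" "length w < r"
    and WW: "\<And>u. u \<in> W \<Longrightarrow> T1 u \<in> S \<and> length u < r"
  shows "\<exists>b. \<not> (\<exists>u\<in>W. prefix (w @ [b]) u)"
proof (rule ccontr)
  assume "\<not> ?thesis"
  then obtain u u' where u: "u \<in> W" "prefix (w @ [False]) u" and u': "u' \<in> W" "prefix (w @ [True]) u'"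
    by blast
  define L where "L = lcp u' u"
  have Lu: "prefix L u" and Lu': "prefix L u'" unfolding L_def
    by (rule longest_common_prefix_prefix2, rule longest_common_prefix_prefix1)
  have nF: "\<not> prefix (w @ [False]) L"
  proof
    assume "prefix (w @ [False]) L"
    then have "prefix (w @ [False]) u'" using Lu' by (rule prefix_order.trans)
    then show False using u'(2) prefix_same_cases by fastforce
  qed
  have "prefix L (w @ [False])" using prefix_same_cases[OF Lu u(2)] nF by blast
  then have Lw: "prefix L w" using nF by auto
  have "prefix w u'" using u'(2) by (metis prefix_snocD prefix_order.less_imp_le)
  moreover have "w \<noteq> u" using u(2) by (metis prefix_length_le length_append_singleton not_less_eq_eq order_refl)
  moreover have "w \<noteq> u'" using u'(2) by (metis prefix_length_le length_append_singleton not_less_eq_eq order_refl)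
  ultimately show False
    using geo[OF gp, of u u' w] WW[OF u(1)] WW[OF u'(1)] W Lw L_def emb1_T1 by auto
qed

lemma leaf_free:
  assumes gp: "general_position (GT_verts r) (GT_adj r) S"
    and W: "T1 w \<in> S" "length w < r" and A: "T1 a \<in> S" "length a < r" "a \<noteq> w"
    and x: "length x = r" "prefix w x" "\<not> prefix (take (Suc (length w)) x) a"
  shows "QL x \<notin> S"
proof
  assume xS: "QL x \<in> S"
  define L where "L = lcp x a"
  define t where "t = take (Suc (length w)) x"
  have Lx: "prefix L x" and La: "prefix L a" unfolding L_def
    by (rule longest_common_prefix_prefix1, rule longest_common_prefix_prefix2)
  have tx: "prefix t x" unfolding t_def by (rule take_is_prefix)
  have nt: "\<not> prefix t L" using La x(3) t_def prefix_order.trans by blast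
  have tw: "t = w @ [x ! length w]" unfolding t_def using x W
    by (metis prefix_take_eq take_Suc_conv_app_nth)
  have "prefix L t" using prefix_same_cases[OF Lx tx] nt by blast
  then have Lw: "prefix L w" using nt tw by auto
  have "w \<noteq> x" using W x by auto
  then show False
    using geo[OF gp, of a x w] A W xS x Lw L_def emb1_T1 emb1_QL by auto
qed


theorem mainTheorem6:
  fixes r :: nat and S :: "gvert set"
  assumes "r \<ge> 2"
    and "general_position (GT_verts r) (GT_adj r) S"
    and "card (S \<inter> V1 r) \<ge> 2"
  shows "\<exists>f :: gvert \<Rightarrow> gvert set.
           (\<forall>v \<in> S \<inter> V1 r. card (f v) = 2 \<and> f v \<subseteq> subtree_leaves r v - S) \<and>
           (\<forall>v \<in> S \<inter> V1 r. \<forall>v' \<in> S \<inter> V1 r. v \<noteq> v' \<longrightarrow> f v \<inter> f v' = {})"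
proof -
  note gp = assms(2)
  define W where "W = {w. T1 w \<in> S \<and> length w < r}"
  have WW: "\<And>u. u \<in> W \<Longrightarrow> T1 u \<in> S \<and> length u < r" by (simp add: W_def)
  have SV: "v \<in> S \<inter> V1 r \<longleftrightarrow> (\<exists>w\<in>W. v = T1 w)" for v
    by (auto simp: W_def V1_def)
  define hasd where "hasd w = (\<exists>u\<in>W. strict_prefix w u)" for w
  define cb where "cb w = (SOME b. \<not> (\<exists>u\<in>W. prefix (w @ [b]) u))" for w
  define g where "g w = (if hasd w then w @ [cb w] else w)" for w
  define lf where "lf w b = QL (g w @ b # replicate (r - length (g w) - 1) False)" for w b
  define f where "f v = (case v of T1 w \<Rightarrow> {lf w False, lf w True} | _ \<Rightarrow> {})" for v
  have cbp: "\<not> (\<exists>u\<in>W. prefix (w @ [cb w]) u)" if "w \<in> W" for w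
  proof -
    have "\<exists>b. \<not> (\<exists>u\<in>W. prefix (w @ [b]) u)"
      using child_exists[OF gp, of w W] WW[OF that] WW by blast
    then show ?thesis unfolding cb_def by (rule someI_ex)
  qed
  have glen: "length (g w) < r" if "w \<in> W" for w
  proof (cases "hasd w")
    case True
    then obtain u where "u \<in> W" "strict_prefix w u" unfolding hasd_def by blast
    then have "length w < length u" "length u < r" using WW prefix_length_less by auto
    then show ?thesis using True by (simp add: g_def)
  qed (use WW[OF that] in \<open>simp add: g_def\<close>)
  have gpre: "prefix w (g w)" for w by (simp add: g_def)
  have lfprops: "lf w b = QL y \<Longrightarrow> length y = r \<and> prefix (g w) y \<and> y ! length (g w) = b" if "w \<in> W" for w b y
    using glen[OF that] unfolding lf_def by auto
  have free: "QL y \<notin> S" if w: "w \<in> W" and y: "length y = r" "prefix (g w) y" for w y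
  proof (cases "hasd w")
    case True
    then obtain u where u: "u \<in> W" "strict_prefix w u" unfolding hasd_def by blast
    have gw: "g w = w @ [cb w]" using True by (simp add: g_def)
    have "\<not> prefix (take (Suc (length w)) y) u"
    proof
      assume "prefix (take (Suc (length w)) y) u"
      moreover have "take (Suc (length w)) y = w @ [cb w]" using y gw
        by (metis length_append_singleton prefix_take_eq)
      ultimately show False using cbp[OF w] u(1) by auto
    qed
    then show ?thesis using leaf_free[OF gp, of w u y] WW[OF w] WW[OF u(1)] u y gpre[of w]
      by (metis prefix_order.less_irrefl prefix_order.trans)
  next
    case False
    have "card (S \<inter> V1 r) \<ge> 2" by (rule assms(3))
    have "\<exists>a\<in>W. a \<noteq> w"
    proof (rule ccontr)
      assume "\<not> ?thesis"
      then have all: "\<And>u. u \<in> W \<Longrightarrow> u = w" by blast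
      have "S \<inter> V1 r \<subseteq> {T1 w}"
      proof
        fix x assume "x \<in> S \<inter> V1 r"
        then obtain u where "u \<in> W" "x = T1 u" using SV by blast
        then show "x \<in> {T1 w}" using all by simp
      qed
      then have "card (S \<inter> V1 r) \<le> card {T1 w}" by (rule card_mono[rotated]) simp
      then have "card (S \<inter> V1 r) \<le> 1" by simp
      then show False using assms(3) by simp
    qed
    then obtain a where a: "a \<in> W" "a \<noteq> w" by blast
    have gw: "g w = w" using False by (simp add: g_def)
    have "\<not> prefix (take (Suc (length w)) y) a"
    proof
      assume h: "prefix (take (Suc (length w)) y) a"
      have "take (Suc (length w)) y = w @ [y ! length w]" using y gw WW[OF w]
        by (metis prefix_take_eq take_Suc_conv_app_nth)
      then have "strict_prefix w a" using h by (metis prefix_snocD)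
      then show False using False a(1) unfolding hasd_def by blast
    qed
    then show ?thesis using leaf_free[OF gp, of w a y] WW[OF w] WW[OF a(1)] a y gw by auto
  qed
  have nodesc: False if w: "w \<in> W" "w' \<in> W" "strict_prefix w w'" "prefix (g w) y" "prefix w' y" for w w' y
  proof -
    have "hasd w" using w unfolding hasd_def by blast
    then have gw: "g w = w @ [cb w]" by (simp add: g_def)
    have "length (g w) \<le> length w'" using gw w(3) prefix_length_less by fastforce
    then have "prefix (g w) w'" using w(4,5) prefix_length_prefix by blast
    then show False using cbp[OF w(1)] w(2) gw by auto
  qed
  show ?thesis
  proof (rule exI[of _ f], rule conjI; (intro ballI impI))
    fix v assume "v \<in> S \<inter> V1 r"
    then obtain w where w: "w \<in> W" "v = T1 w" using SV by blast
    have ne: "lf w False \<noteq> lf w True" unfolding lf_def by simp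
    show "card (f v) = 2 \<and> f v \<subseteq> subtree_leaves r v - S"
    proof
      show "card (f v) = 2" using ne w by (simp add: f_def)
      show "f v \<subseteq> subtree_leaves r v - S"
      proof
        fix x assume "x \<in> f v"
        then obtain b where xb: "x = lf w b" using w by (auto simp: f_def)
        then obtain y where y: "x = QL y" unfolding lf_def by blast
        have yp: "length y = r" "prefix (g w) y" using lfprops[OF w(1)] xb y by auto
        then have "prefix w y" using gpre prefix_order.trans by blast
        then have "x \<in> subtree_leaves r v" using w yp y by simp
        moreover have "x \<notin> S" using free[OF w(1) yp] y by simp
        ultimately show "x \<in> subtree_leaves r v - S" by blast
      qed
    qed
  next
    fix v v' assume v: "v \<in> S \<inter> V1 r" and v': "v' \<in> S \<inter> V1 r" and ne: "v \<noteq> v'"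
    obtain w where w: "w \<in> W" "v = T1 w" using v SV by blast
    obtain w' where w': "w' \<in> W" "v' = T1 w'" using v' SV by blast
    show "f v \<inter> f v' = {}"
    proof (rule ccontr)
      assume "f v \<inter> f v' \<noteq> {}"
      then obtain x where x: "x \<in> f v" "x \<in> f v'" by blast
      obtain b where xb1: "x = lf w b" using x(1) w by (auto simp: f_def)
      obtain b' where xb2: "x = lf w' b'" using x(2) w' by (auto simp: f_def)
      note xb = xb1 xb2
      then obtain y where y: "x = QL y" unfolding lf_def by blast
      have p1: "prefix (g w) y" using lfprops[OF w(1)] xb y by auto
      have p2: "prefix (g w') y" using lfprops[OF w'(1)] xb y by auto
      have q1: "prefix w y" using p1 gpre prefix_order.trans by blast
      have q2: "prefix w' y" using p2 gpre prefix_order.trans by blast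
      have "w \<noteq> w'" using ne w w' by auto
      then have "strict_prefix w w' \<or> strict_prefix w' w"
        using prefix_same_cases[OF q1 q2] by auto
      then show False using nodesc[OF w(1) w'(1) _ p1 q2] nodesc[OF w'(1) w(1) _ p2 q1] by blast
    qed
  qed
qed

end
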